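(* Every closed interval $[a,b]$ in $\overline{\mathbb{R}}$ (with $a<b$ in $\overline{\mathbb{R}}$) is the set of right hand sequential secant derivatives at $0$ of some continuous function $f:[0,1]\to\mathbb{R}$.
   Context: $\overline{\mathbb{R}}=\mathbb{R}\cup\{\pm\infty\}$, and $[a,b]=\{t\in\overline{\mathbb{R}}:a\le t\le b\}$. $L\in\overline{\mathbb{R}}$ is a right hand sequential secant derivative of $f$ at $0$ if there is a sequence $h_n>0$ with $h_n\to0$ and $\frac{f(h_n)-f(0)}{h_n}\to L$ as $n\to\infty$. *)

theory Defs
  imports "HOL-Analysis.Analysis"
begin

text \<open>The set of right hand sequential secant derivatives of f at 0 (values in the
extended reals). The sequence h n is required to lie in the domain (0,1] of f.\<close>
definition rhs_secant_derivs :: "(real \<Rightarrow> real) \<Rightarrow> ereal set" where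
  "rhs_secant_derivs f = {L. \<exists>h :: nat \<Rightarrow> real. (\<forall>n. 0 < h n \<and> h n \<le> 1) \<and> h \<longlonglongrightarrow> 0 \<and>
       ((\<lambda>n. ereal ((f (h n) - f 0) / h n)) \<longlonglongrightarrow> L)}"

end

theory Submission
  imports Defs "HOL-Real_Asymp.Real_Asymp"
begin

lemma s1: "sin (3*pi/2 + 2*pi*real n) = -1"
proof -
  have "sin (3*pi/2 + 2*pi*real n) = sin (3/2*pi + 2 * real n * pi)" by (simp add: algebra_simps)
  also have "... = -1" by (simp only: sin_add sin_3over2_pi cos_3over2_pi sin_2npi cos_2npi)
  finally show ?thesis .
qed

lemma s2: "sin (pi/2 + 2*pi*real n) = 1"
proof -
  have "sin (pi/2 + 2*pi*real n) = sin (pi/2 + 2 * real n * pi)" by (simp add: algebra_simps)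
  also have "... = 1" by (simp only: sin_add sin_pi_half cos_pi_half sin_2npi cos_2npi)
  finally show ?thesis .
qed

theorem theorem2p7:
  fixes a b :: ereal
  assumes "a < b"
  shows "\<exists>f :: real \<Rightarrow> real. continuous_on {0..1} f \<and> rhs_secant_derivs f = {a..b}"
proof -
  obtain m where am: "a < ereal m" and mb: "ereal m < b" using ereal_dense2[OF assms] by blast
  have anotp: "a \<noteq> \<infinity>" and bnotm: "b \<noteq> -\<infinity>" using am mb by auto
  define ra where "ra = real_of_ereal a"
  define rb where "rb = real_of_ereal b"
  define A :: "real \<Rightarrow> real" where "A x = (if a = -\<infinity> then m - 1 / sqrt x else max ra (m - 1 / sqrt x))" for x
  define B :: "real \<Rightarrow> real" where "B x = (if b = \<infinity> then m + 1 / sqrt x else min rb (m + 1 / sqrt x))" for x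
  define t :: "real \<Rightarrow> real" where "t x = (1 + sin (1 / x)) / 2" for x
  define g :: "real \<Rightarrow> real" where "g x = A x + (B x - A x) * t x" for x
  define f :: "real \<Rightarrow> real" where "f x = (if x \<le> 0 then 0 else x * g x)" for x
  have aA: "a \<le> ereal (A x)" for x
    using anotp by (cases a) (auto simp: A_def ra_def)
  have Bb: "ereal (B x) \<le> b" for x
    using bnotm by (cases b) (auto simp: B_def rb_def)
  have ram: "a \<noteq> -\<infinity> \<Longrightarrow> ra \<le> m" using am anotp by (cases a) (auto simp: ra_def)
  have rbm: "b \<noteq> \<infinity> \<Longrightarrow> m \<le> rb" using mb bnotm by (cases b) (auto simp: rb_def)
  have Am: "A x \<le> m" if "x > 0" for x using that ram by (auto simp: A_def)
  have Bm: "m \<le> B x" if "x > 0" for x using that rbm by (auto simp: B_def)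
  have hlp: "0 \<le> (1 + s) / 2 \<and> (1 + s) / 2 \<le> 1" if "-1 \<le> s" "s \<le> 1" for s :: real
    using that by (auto simp: field_simps)
  have t01a: "0 \<le> t x" for x
    using hlp[OF sin_ge_minus_one[of "1/x"] sin_le_one[of "1/x"]] unfolding t_def by blast
  have t01b: "t x \<le> 1" for x
    using hlp[OF sin_ge_minus_one[of "1/x"] sin_le_one[of "1/x"]] unfolding t_def by blast
  note t01 = t01a t01b
  have Ag: "A x \<le> g x" if "x > 0" for x
    using that Am[of x] Bm[of x] t01[of x] by (simp add: g_def)
  have gB: "g x \<le> B x" if "x > 0" for x
  proof -
    have "(B x - A x) * t x \<le> (B x - A x) * 1"
      using Am[of x] Bm[of x] t01[of x] that by (intro mult_left_mono) auto
    then show ?thesis by (simp add: g_def)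
  qed
  have ag: "a \<le> ereal (g x)" if "x > 0" for x using aA[of x] Ag[of x] that by (metis ereal_less_eq(3) order_trans)
  have gb: "ereal (g x) \<le> b" if "x > 0" for x using Bb[of x] gB[of x] that by (metis ereal_less_eq(3) order_trans)
  have q: "(f h - f 0) / h = g h" if "h > 0" for h using that by (simp add: f_def)
  have contA: "continuous_on {0<..} A"
    unfolding A_def by (cases "a = -\<infinity>") (auto intro!: continuous_intros)
  have contB: "continuous_on {0<..} B"
    unfolding B_def by (cases "b = \<infinity>") (auto intro!: continuous_intros)
  have contg: "continuous_on {0<..} g"
    unfolding g_def t_def by (auto intro!: continuous_intros contA contB)
  have cont: "continuous_on {0..1} f"
  proof (unfold continuous_on_eq_continuous_within, intro ballI)
    fix x :: real assume x: "x \<in> {0..1}"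
    show "continuous (at x within {0..1}) f"
    proof (cases "x = 0")
      case False
      then have xp: "x > 0" using x by auto
      have "isCont (\<lambda>y. y * g y) x"
        using contg xp by (intro continuous_intros) (auto simp: continuous_on_eq_continuous_at)
      moreover have "\<forall>\<^sub>F y in nhds x. f y = y * g y"
        using eventually_nhds_in_open[of "{0<..}" x] xp
        by (auto elim!: eventually_mono simp: f_def)
      ultimately have "isCont f x" using isCont_cong[of f "\<lambda>y. y * g y" x] by simp
      then show ?thesis by (rule continuous_at_imp_continuous_within)
    next
      case True
      define C where "C = \<bar>m\<bar> + \<bar>ra\<bar> + \<bar>rb\<bar>"
      have bnd: "norm (f y) \<le> 2 * C * y + 2 * sqrt y" if "y \<in> {0..1}" for y
      proof (cases "y = 0")
        case True then show ?thesis by (simp add: f_def)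
      next
        case False
        then have yp: "y > 0" using that by auto
        define sy where "sy = 1 / sqrt y"
        have sp: "0 < sy" using yp by (simp add: sy_def)
        have "\<bar>A y\<bar> \<le> C + sy"
          unfolding A_def C_def sy_def[symmetric] using sp by (auto simp: abs_if max_def)
        moreover have "\<bar>B y\<bar> \<le> C + sy"
          unfolding B_def C_def sy_def[symmetric] using sp by (auto simp: abs_if min_def)
        ultimately have "\<bar>g y\<bar> \<le> 2 * (C + sy)"
          using Ag[OF yp] gB[OF yp] by (smt (verit))
        then have "\<bar>g y\<bar> \<le> 2 * (C + 1 / sqrt y)" by (simp add: sy_def)
        then have "y * \<bar>g y\<bar> \<le> y * (2 * (C + 1 / sqrt y))"
          using yp by (intro mult_left_mono) auto
        also have "... = 2 * C * y + 2 * (y / sqrt y)" by (simp add: algebra_simps)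
        also have "y / sqrt y = sqrt y" using yp by (metis real_div_sqrt less_imp_le)
        finally show ?thesis using yp by (simp add: f_def abs_mult)
      qed
      have "((\<lambda>y. 2 * C * y + 2 * sqrt y) \<longlongrightarrow> 2 * C * 0 + 2 * sqrt 0) (at 0 within {0..1})"
        by (intro tendsto_intros)
      then have "((\<lambda>y. 2 * C * y + 2 * sqrt y) \<longlongrightarrow> 0) (at 0 within {0..1})" by simp
      then have "(f \<longlongrightarrow> 0) (at 0 within {0..1})"
        by (rule Lim_null_comparison[rotated])
           (use bnd in \<open>auto simp: eventually_at_filter intro!: always_eventually\<close>)
      then show ?thesis using True by (simp add: continuous_within f_def)
    qed
  qed
  define u :: "nat \<Rightarrow> real" where "u n = 1 / (3*pi/2 + 2*pi*real n)" for n
  define v :: "nat \<Rightarrow> real" where "v n = 1 / (pi/2 + 2*pi*real n)" for n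
  have dn: "0 \<le> 2*pi*real n" for n by simp
  have du: "1 \<le> 3*pi/2 + 2*pi*real n" for n using pi_gt3 dn[of n] by linarith
  have dv: "1 \<le> pi/2 + 2*pi*real n" for n using pi_gt3 dn[of n] by linarith
  have up: "0 < u n" "u n \<le> 1" for n
    using du[of n] by (auto simp: u_def)
  have vp: "0 < v n" "v n \<le> 1" for n
    using dv[of n] by (auto simp: v_def)
  have uv: "u n < v n" for n
    unfolding u_def v_def using dv[of n] pi_gt3 by (intro divide_strict_left_mono) auto
  have u0: "u \<longlonglongrightarrow> 0" unfolding u_def by real_asymp
  have v0: "v \<longlonglongrightarrow> 0" unfolding v_def by real_asymp
  have gu: "g (u n) = m - sqrt (3*pi/2 + 2*pi*real n) \<or> g (u n) = max ra (m - sqrt (3*pi/2 + 2*pi*real n))"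
    for n
  proof -
    have "t (u n) = 0" unfolding t_def u_def using s1[of n] by simp
    moreover have "1 / sqrt (u n) = sqrt (3*pi/2 + 2*pi*real n)"
      unfolding u_def by (simp add: real_sqrt_divide)
    ultimately show ?thesis by (auto simp: g_def A_def)
  qed
  have guA: "g (u n) = A (u n)" for n
  proof -
    have "t (u n) = 0" unfolding t_def u_def using s1[of n] by simp
    then show ?thesis by (simp add: g_def)
  qed
  have gvB: "g (v n) = B (v n)" for n
  proof -
    have "t (v n) = 1" unfolding t_def v_def using s2[of n] by simp
    then show ?thesis by (simp add: g_def)
  qed
  have su: "1 / sqrt (u n) = sqrt (3*pi/2 + 2*pi*real n)" for n
    unfolding u_def by (simp add: real_sqrt_divide)
  have sv: "1 / sqrt (v n) = sqrt (pi/2 + 2*pi*real n)" for n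
    unfolding v_def by (simp add: real_sqrt_divide)
  have lu: "filterlim (\<lambda>n::nat. m - sqrt (3*pi/2 + 2*pi*real n)) at_bot sequentially" by real_asymp
  have lv: "filterlim (\<lambda>n::nat. m + sqrt (pi/2 + 2*pi*real n)) at_top sequentially" by real_asymp
  have "rhs_secant_derivs f = {a..b}"
  proof
    show "rhs_secant_derivs f \<subseteq> {a..b}"
    proof
      fix L assume "L \<in> rhs_secant_derivs f"
      then obtain h where h: "\<forall>n. 0 < h n \<and> h n \<le> 1" "h \<longlonglongrightarrow> 0"
        and lim: "(\<lambda>n. ereal ((f (h n) - f 0) / h n)) \<longlonglongrightarrow> L"
        unfolding rhs_secant_derivs_def by blast
      have eq: "(\<lambda>n. ereal ((f (h n) - f 0) / h n)) = (\<lambda>n. ereal (g (h n)))"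
        using h(1) q by auto
      have "a \<le> L" using lim unfolding eq
        by (rule tendsto_lowerbound) (use h(1) in \<open>auto intro: ag always_eventually\<close>)
      moreover have "L \<le> b" using lim unfolding eq
        by (rule tendsto_upperbound) (use h(1) in \<open>auto intro: gb always_eventually\<close>)
      ultimately show "L \<in> {a..b}" by auto
    qed
  next
    show "{a..b} \<subseteq> rhs_secant_derivs f"
    proof
      fix L assume L: "L \<in> {a..b}"
      show "L \<in> rhs_secant_derivs f"
      proof (cases L)
        case PInf
        then have "b = \<infinity>" using L by auto
        then have "(\<lambda>n. ereal ((f (v n) - f 0) / v n)) = (\<lambda>n. ereal (m + sqrt (pi/2 + 2*pi*real n)))"
          using q vp gvB sv by (auto simp: B_def)
        then have "(\<lambda>n. ereal ((f (v n) - f 0) / v n)) \<longlonglongrightarrow> L"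
          using lv PInf by (simp add: tendsto_PInfty_eq_at_top)
        then show ?thesis unfolding rhs_secant_derivs_def using vp v0 by blast
      next
        case MInf
        then have "a = -\<infinity>" using L by auto
        then have "(\<lambda>n. ereal ((f (u n) - f 0) / u n)) = (\<lambda>n. ereal (m - sqrt (3*pi/2 + 2*pi*real n)))"
          using q up guA su by (auto simp: A_def)
        then have "(\<lambda>n. ereal ((f (u n) - f 0) / u n)) \<longlonglongrightarrow> L"
          using lu MInf by (simp add: ereal_tendsto_simps2(3)[unfolded comp_def])
        then show ?thesis unfolding rhs_secant_derivs_def using up u0 by blast
      next
        case (real l)
        have "\<forall>\<^sub>F n in sequentially. m - sqrt (3*pi/2 + 2*pi*real n) \<le> l"
          using lu by (simp add: filterlim_at_bot)
        moreover have "\<forall>\<^sub>F n in sequentially. l \<le> m + sqrt (pi/2 + 2*pi*real n)"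
          using lv by (simp add: filterlim_at_top)
        ultimately obtain N where N: "\<And>n. n \<ge> N \<Longrightarrow> m - sqrt (3*pi/2 + 2*pi*real n) \<le> l
             \<and> l \<le> m + sqrt (pi/2 + 2*pi*real n)"
          unfolding eventually_sequentially by (metis (no_types, lifting) max.boundedE max.cobounded1 max.cobounded2 order_trans)
        have ral: "a \<noteq> -\<infinity> \<Longrightarrow> ra \<le> l" using L real anotp by (cases a) (auto simp: ra_def)
        have rbl: "b \<noteq> \<infinity> \<Longrightarrow> l \<le> rb" using L real bnotm by (cases b) (auto simp: rb_def)
        have "\<exists>x. u (n + N) \<le> x \<and> x \<le> v (n + N) \<and> g x = l" for n
        proof (rule IVT')
          show "g (u (n + N)) \<le> l"
            using N[of "n+N"] ral unfolding guA A_def su by auto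
          show "l \<le> g (v (n + N))"
            using N[of "n+N"] rbl unfolding gvB B_def sv by auto
          show "u (n + N) \<le> v (n + N)" using uv less_imp_le by blast
          show "continuous_on {u (n + N)..v (n + N)} g"
            by (rule continuous_on_subset[OF contg]) (use up(1)[of "n+N"] in auto)
        qed
        then obtain h where h: "\<And>n. u (n + N) \<le> h n \<and> h n \<le> v (n + N) \<and> g (h n) = l"
          by metis
        have hp: "0 < h n \<and> h n \<le> 1" for n
          using h[of n] up[of "n+N"] vp[of "n+N"] by auto
        have "h \<longlonglongrightarrow> 0"
          by (rule tendsto_sandwich[of "\<lambda>n. u (n + N)" _ _ "\<lambda>n. v (n + N)"])
             (use h in \<open>auto intro: always_eventually LIMSEQ_ignore_initial_segment u0 v0\<close>)
        moreover have "(\<lambda>n. ereal ((f (h n) - f 0) / h n)) = (\<lambda>n. L)"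
          using q hp h real by auto
        ultimately show ?thesis unfolding rhs_secant_derivs_def using hp by (intro CollectI exI[of _ h]) auto
      qed
    qed
  qed
  then show ?thesis using cont by blast
qed

end
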